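(* Let $n\neq 1$ be a real number, $k_n=n-1$, and $k_0,k_1,k_2\in\mathbb{R}$. On the phase space with canonical coordinates $(r,\phi,p_r,p_\phi)$, $r>0$, restricted to the open set where $\cos(k_n\phi)\neq 0$, consider $$H_{nb}=\tfrac12 r^{2n}\Big(p_r^2+\tfrac{p_\phi^2}{r^2}\Big)+\frac{k_0}{r^{2k_n}}\big(\cos^2(k_n\phi)+4\sin^2(k_n\phi)\big)+r^{2k_n}\frac{k_1}{\cos^2(k_n\phi)}+\frac{k_2}{r^{k_n}}\sin(k_n\phi).$$ With $P_1=r^n\big(p_r\cos(k_n\phi)+\tfrac1r p_\phi\sin(k_n\phi)\big)$ and $P_2=r^n\big(p_r\sin(k_n\phi)-\tfrac1r p_\phi\cos(k_n\phi)\big)$, the functions $$J_{b1}=P_1^2+\frac{2k_0}{r^{2k_n}}\cos^2(k_n\phi)+2k_1r^{2k_n}\sec^2(k_n\phi),\qquad J_{b2}=P_2^2+\frac{8k_0}{r^{2k_n}}\sin^2(k_n\phi)+\frac{2k_2}{r^{k_n}}\sin(k_n\phi),$$ $$J_{b3}=P_1p_\phi-\frac{k_0}{r^{3k_n}}\cos(k_n\phi)\sin(2k_n\phi)+k_1r^{k_n}\sec^3(k_n\phi)\sin(2k_n\phi)-\frac{k_2}{2r^{2k_n}}\cos^2(k_n\phi)$$ are three independent constants of motion of $H_{nb}$, i.e. $\{J_{bj},H_{nb}\}=0$ for $j=1,2,3$; hence $H_{nb}$ is superintegrable.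
   Context: The Poisson bracket is the canonical one in $(r,\phi,p_r,p_\phi)$. A constant of motion of $H$ is a function $F$ with $\{F,H\}=0$. *)

theory Defs
  imports "HOL-Analysis.Analysis"
begin

type_synonym psfun = "real \<Rightarrow> real \<Rightarrow> real \<Rightarrow> real \<Rightarrow> real"

definition d_r :: "psfun \<Rightarrow> psfun" where
  "d_r F r ph pr pph = deriv (\<lambda>t. F t ph pr pph) r"
definition d_phi :: "psfun \<Rightarrow> psfun" where
  "d_phi F r ph pr pph = deriv (\<lambda>t. F r t pr pph) ph"
definition d_pr :: "psfun \<Rightarrow> psfun" where
  "d_pr F r ph pr pph = deriv (\<lambda>t. F r ph t pph) pr"
definition d_pphi :: "psfun \<Rightarrow> psfun" where
  "d_pphi F r ph pr pph = deriv (\<lambda>t. F r ph pr t) pph"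

definition poisson :: "psfun \<Rightarrow> psfun \<Rightarrow> psfun" where
  "poisson F G r ph pr pph =
     d_r F r ph pr pph * d_pr G r ph pr pph - d_pr F r ph pr pph * d_r G r ph pr pph
   + d_phi F r ph pr pph * d_pphi G r ph pr pph - d_pphi F r ph pr pph * d_phi G r ph pr pph"

definition dom_nb :: "real \<Rightarrow> (real \<times> real \<times> real \<times> real) set" where
  "dom_nb n = {(r, ph, pr, pph). r > 0 \<and> cos ((n - 1) * ph) \<noteq> 0}"

definition H_nb :: "real \<Rightarrow> real \<Rightarrow> real \<Rightarrow> real \<Rightarrow> psfun" where
  "H_nb n k0 k1 k2 r ph pr pph =
     (let kn = n - 1 in
      1/2 * r powr (2*n) * (pr^2 + pph^2 / r^2)
      + k0 / r powr (2*kn) * ((cos (kn*ph))^2 + 4 * (sin (kn*ph))^2)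
      + r powr (2*kn) * (k1 / (cos (kn*ph))^2)
      + k2 / r powr kn * sin (kn*ph))"

definition P1 :: "real \<Rightarrow> psfun" where
  "P1 n r ph pr pph = r powr n * (pr * cos ((n-1)*ph) + 1/r * pph * sin ((n-1)*ph))"

definition P2 :: "real \<Rightarrow> psfun" where
  "P2 n r ph pr pph = r powr n * (pr * sin ((n-1)*ph) - 1/r * pph * cos ((n-1)*ph))"

definition J_b1 :: "real \<Rightarrow> real \<Rightarrow> real \<Rightarrow> real \<Rightarrow> psfun" where
  "J_b1 n k0 k1 k2 r ph pr pph =
     (let kn = n - 1 in
      (P1 n r ph pr pph)^2 + 2*k0 / r powr (2*kn) * (cos (kn*ph))^2
      + 2*k1 * r powr (2*kn) * (1 / cos (kn*ph))^2)"

definition J_b2 :: "real \<Rightarrow> real \<Rightarrow> real \<Rightarrow> real \<Rightarrow> psfun" where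
  "J_b2 n k0 k1 k2 r ph pr pph =
     (let kn = n - 1 in
      (P2 n r ph pr pph)^2 + 8*k0 / r powr (2*kn) * (sin (kn*ph))^2
      + 2*k2 / r powr kn * sin (kn*ph))"

definition J_b3 :: "real \<Rightarrow> real \<Rightarrow> real \<Rightarrow> real \<Rightarrow> psfun" where
  "J_b3 n k0 k1 k2 r ph pr pph =
     (let kn = n - 1 in
      P1 n r ph pr pph * pph
      - k0 / r powr (3*kn) * cos (kn*ph) * sin (2*kn*ph)
      + k1 * r powr kn * (1 / cos (kn*ph))^3 * sin (2*kn*ph)
      - k2 / (2 * r powr (2*kn)) * (cos (kn*ph))^2)"

definition indep3_at :: "psfun \<Rightarrow> psfun \<Rightarrow> psfun \<Rightarrow> real \<times> real \<times> real \<times> real \<Rightarrow> bool" where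
  "indep3_at F G K p = (case p of (r, ph, pr, pph) \<Rightarrow>
     (\<forall>a b c::real.
        a * d_r F r ph pr pph + b * d_r G r ph pr pph + c * d_r K r ph pr pph = 0 \<and>
        a * d_phi F r ph pr pph + b * d_phi G r ph pr pph + c * d_phi K r ph pr pph = 0 \<and>
        a * d_pr F r ph pr pph + b * d_pr G r ph pr pph + c * d_pr K r ph pr pph = 0 \<and>
        a * d_pphi F r ph pr pph + b * d_pphi G r ph pr pph + c * d_pphi K r ph pr pph = 0
        \<longrightarrow> a = 0 \<and> b = 0 \<and> c = 0))"

definition func_indep3_on :: "psfun \<Rightarrow> psfun \<Rightarrow> psfun \<Rightarrow> (real \<times> real \<times> real \<times> real) set \<Rightarrow> bool" where
  "func_indep3_on F G K U = (U \<subseteq> closure {p \<in> U. indep3_at F G K p})"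

end

theory Submission
  imports Defs
begin


definition Hn :: "real \<Rightarrow> real \<Rightarrow> real \<Rightarrow> real \<Rightarrow> real \<Rightarrow> real \<Rightarrow> real \<Rightarrow> real \<Rightarrow> real \<Rightarrow> real \<Rightarrow> real" where
  "Hn k k0 k1 k2 r R cn sn pr pp = 1/2*r^2*R^2*pr^2 + 1/2*R^2*pp^2 + k0*(cn^2+4* sn^2)/R^2 + k1*R^2/cn^2 + k2* sn/R"
definition P1n :: "real \<Rightarrow> real \<Rightarrow> real \<Rightarrow> real \<Rightarrow> real \<Rightarrow> real \<Rightarrow> real" where
  "P1n r R cn sn pr pp = R*(r*pr*cn+pp* sn)"
definition P2n :: "real \<Rightarrow> real \<Rightarrow> real \<Rightarrow> real \<Rightarrow> real \<Rightarrow> real \<Rightarrow> real" where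
  "P2n r R cn sn pr pp = R*(r*pr* sn-pp*cn)"
definition J1n :: "real \<Rightarrow> real \<Rightarrow> real \<Rightarrow> real \<Rightarrow> real \<Rightarrow> real \<Rightarrow> real \<Rightarrow> real \<Rightarrow> real \<Rightarrow> real \<Rightarrow> real" where
  "J1n k k0 k1 k2 r R cn sn pr pp = (P1n r R cn sn pr pp)^2 + 2*k0*cn^2/R^2 + 2*k1*R^2/cn^2"
definition J2n :: "real \<Rightarrow> real \<Rightarrow> real \<Rightarrow> real \<Rightarrow> real \<Rightarrow> real \<Rightarrow> real \<Rightarrow> real \<Rightarrow> real \<Rightarrow> real \<Rightarrow> real" where
  "J2n k k0 k1 k2 r R cn sn pr pp = (P2n r R cn sn pr pp)^2 + 8*k0* sn^2/R^2 + 2*k2* sn/R"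
definition J3n :: "real \<Rightarrow> real \<Rightarrow> real \<Rightarrow> real \<Rightarrow> real \<Rightarrow> real \<Rightarrow> real \<Rightarrow> real \<Rightarrow> real \<Rightarrow> real \<Rightarrow> real" where
  "J3n k k0 k1 k2 r R cn sn pr pp = P1n r R cn sn pr pp * pp - 2*k0* sn*cn^2/R^3 + 2*k1*R* sn/cn^2 - k2*cn^2/(2*R^2)"

lemma powr_facts:
  assumes "r > (0::real)"
  shows "r powr (2*n) = r^2 * (r powr (n-1))^2" "r powr (2*(n-1)) = (r powr (n-1))^2"
    "r powr (3*(n-1)) = (r powr (n-1))^3" "r powr n = r * r powr (n-1)"
proof -
  have e: "r powr (real m * a) = (r powr a) ^ m" for m :: nat and a :: real
    using assms by (simp add: powr_powr[symmetric] powr_realpow mult.commute)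
  have f: "r powr (a + b) = r powr a * r powr b" for a b by (simp add: powr_add)
  show "r powr (2*(n-1)) = (r powr (n-1))^2" using e[of 2 "n-1"] by (simp only: of_nat_numeral)
  show "r powr (3*(n-1)) = (r powr (n-1))^3" using e[of 3 "n-1"] by (simp only: of_nat_numeral)
  show g: "r powr n = r * r powr (n-1)" using f[of 1 "n-1"] assms by simp
  show "r powr (2*n) = r^2 * (r powr (n-1))^2" using e[of 2 n] g by (simp only: of_nat_numeral power_mult_distrib)
qed

lemma Aux1: fixes r R c s pr pph k0 k1 k2 :: real assumes "r > 0" "R > 0"
  shows "1/2 * (r^2*R^2) * (pr^2+pph^2/r^2) + k0/R^2*(c^2 + 4 * s^2) + R^2*(k1/c^2) + k2/R * s
     = 1/2*r^2*R^2*pr^2 + 1/2*R^2*pph^2 + k0*(c^2+4 * s^2)/R^2 + k1*R^2/c^2 + k2 * s/R"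
proof -
  have 1: "1/2 * (r^2*R^2) * (pr^2+pph^2/r^2) = 1/2*r^2*R^2*pr^2 + 1/2*R^2*pph^2"
    using assms by (simp add: field_simps)
  have 2: "k0/R^2*(c^2 + 4 * s^2) = k0*(c^2+4 * s^2)/R^2" by simp
  have 3: "R^2*(k1/c^2) = k1*R^2/c^2" by simp
  have 4: "k2/R * s = k2 * s/R" by simp
  show ?thesis unfolding 1 2 3 4 ..
qed
lemma Aux2: fixes r R c s pr pph k0 k1 k2 :: real assumes "r > 0" "R > 0"
  shows "(r * R * (pr * c + 1/r * pph * s))^2 + 2*k0/R^2 * c^2 + 2*k1 * R^2 * (1/c)^2
     = (R*(r*pr*c+pph* s))^2 + 2*k0*c^2/R^2 + 2*k1*R^2/c^2"
proof -
  have 1: "r * R * (pr * c + 1/r * pph * s) = R*(r*pr*c+pph* s)"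
    using assms by (simp add: field_simps)
  have 2: "2*k0/R^2 * c^2 = 2*k0*c^2/R^2" by simp
  have 3: "2*k1 * R^2 * (1/c)^2 = 2*k1*R^2/c^2" by (simp add: power_one_over)
  show ?thesis unfolding 1 2 3 ..
qed
lemma Aux3: fixes r R c s pr pph k0 k1 k2 :: real assumes "r > 0" "R > 0"
  shows "(r * R * (pr * s - 1/r * pph * c))^2 + 8*k0/R^2 * s^2 + 2*k2/R * s
     = (R*(r*pr* s-pph*c))^2 + 8*k0* s^2/R^2 + 2*k2* s/R"
proof -
  have 1: "r * R * (pr * s - 1/r * pph * c) = R*(r*pr* s-pph*c)"
    using assms by (simp add: field_simps)
  have 2: "8*k0/R^2 * s^2 = 8*k0* s^2/R^2" by simp
  have 3: "2*k2/R * s = 2*k2* s/R" by simp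
  show ?thesis unfolding 1 2 3 ..
qed
lemma Aux4: fixes r R c s pr pph k0 k1 k2 :: real assumes "r > 0" "R > 0"
  shows "r * R * (pr * c + 1/r * pph * s) * pph - k0/R^3 * c * (2 * s * c)
      + k1 * R * (1/c)^3 * (2 * s * c) - k2/(2*R^2) * c^2
     = R*(r*pr*c+pph * s) * pph - 2*k0 * s*c^2/R^3 + 2*k1*R * s/c^2 - k2*c^2/(2*R^2)"
proof -
  have 1: "r * R * (pr * c + 1/r * pph * s) = R*(r*pr*c+pph * s)"
    using assms by (simp add: field_simps)
  have 2: "k1 * R * (1/c)^3 * (2 * s * c) = 2*k1*R * s/c^2"
    by (cases "c = 0") (simp_all add: field_simps power2_eq_square power3_eq_cube)
  have 3: "k0/R^3 * c * (2 * s * c) = 2*k0 * s*c^2/R^3" by (simp add: power2_eq_square)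
  have 4: "k2/(2*R^2) * c^2 = k2*c^2/(2*R^2)" by simp
  show ?thesis unfolding 1 2 3 4 ..
qed

lemma H_eq:
  assumes "r > 0"
  shows "H_nb n k0 k1 k2 r ph pr pph = Hn (n-1) k0 k1 k2 r (r powr (n-1)) (cos ((n-1)*ph)) (sin ((n-1)*ph)) pr pph"
proof -
  have Rp: "r powr (n-1) > 0" using assms powr_gt_zero[of r "n-1"] by linarith
  show ?thesis unfolding H_nb_def Let_def powr_facts[OF assms, of n] Hn_def
    by (rule Aux1[OF assms Rp])
qed

lemma J1_eq:
  assumes "r > 0"
  shows "J_b1 n k0 k1 k2 r ph pr pph = J1n (n-1) k0 k1 k2 r (r powr (n-1)) (cos ((n-1)*ph)) (sin ((n-1)*ph)) pr pph"
proof -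
  have Rp: "r powr (n-1) > 0" using assms powr_gt_zero[of r "n-1"] by linarith
  show ?thesis unfolding J_b1_def Let_def powr_facts[OF assms, of n] J1n_def P1n_def P1_def
    by (rule Aux2[OF assms Rp])
qed

lemma J2_eq:
  assumes "r > 0"
  shows "J_b2 n k0 k1 k2 r ph pr pph = J2n (n-1) k0 k1 k2 r (r powr (n-1)) (cos ((n-1)*ph)) (sin ((n-1)*ph)) pr pph"
proof -
  have Rp: "r powr (n-1) > 0" using assms powr_gt_zero[of r "n-1"] by linarith
  show ?thesis unfolding J_b2_def Let_def powr_facts[OF assms, of n] J2n_def P2n_def P2_def
    by (rule Aux3[OF assms Rp])
qed

lemma J3_eq:
  assumes "r > 0"
  shows "J_b3 n k0 k1 k2 r ph pr pph = J3n (n-1) k0 k1 k2 r (r powr (n-1)) (cos ((n-1)*ph)) (sin ((n-1)*ph)) pr pph"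
proof -
  have Rp: "r powr (n-1) > 0" using assms powr_gt_zero[of r "n-1"] by linarith
  have sd: "sin (2*(n-1)*ph) = 2 * sin ((n-1)*ph) * cos ((n-1)*ph)"
    using sin_double[of "(n-1)*ph"] by (simp only: mult.assoc)
  show ?thesis unfolding J_b3_def Let_def powr_facts[OF assms, of n] J3n_def P1n_def P1_def sd
    by (rule Aux4[OF assms Rp])
qed



lemma rpk: "(r::real) > 0 \<Longrightarrow> r powr (k - 1) = r powr k / r"
  using powr_diff[of r k 1] by simp
definition Hr :: "real \<Rightarrow> real \<Rightarrow> real \<Rightarrow> real \<Rightarrow> real \<Rightarrow> real \<Rightarrow> real \<Rightarrow> real \<Rightarrow> real \<Rightarrow> real \<Rightarrow> real" where
  "Hr k k0 k1 k2 r R c s pr pp = (k+1)*r*R^2*pr^2 + k*R^2*pp^2/r - 2*k*k0*(c^2+4 * s^2)/(r*R^2) + 2*k*k1*R^2/(r*c^2) - k*k2 * s/(r*R)"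

definition Hph :: "real \<Rightarrow> real \<Rightarrow> real \<Rightarrow> real \<Rightarrow> real \<Rightarrow> real \<Rightarrow> real \<Rightarrow> real \<Rightarrow> real \<Rightarrow> real \<Rightarrow> real" where
  "Hph k k0 k1 k2 r R c s pr pp = 6*k*k0 * s*c/R^2 + 2*k*k1*R^2 * s/c^3 + k*k2*c/R"

definition Hpr :: "real \<Rightarrow> real \<Rightarrow> real \<Rightarrow> real \<Rightarrow> real \<Rightarrow> real \<Rightarrow> real \<Rightarrow> real \<Rightarrow> real \<Rightarrow> real \<Rightarrow> real" where
  "Hpr k k0 k1 k2 r R c s pr pp = r^2*R^2*pr"

definition Hpp :: "real \<Rightarrow> real \<Rightarrow> real \<Rightarrow> real \<Rightarrow> real \<Rightarrow> real \<Rightarrow> real \<Rightarrow> real \<Rightarrow> real \<Rightarrow> real \<Rightarrow> real" where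
  "Hpp k k0 k1 k2 r R c s pr pp = R^2*pp"

definition J1r :: "real \<Rightarrow> real \<Rightarrow> real \<Rightarrow> real \<Rightarrow> real \<Rightarrow> real \<Rightarrow> real \<Rightarrow> real \<Rightarrow> real \<Rightarrow> real \<Rightarrow> real" where
  "J1r k k0 k1 k2 r R c s pr pp = 2*(P1n r R c s pr pp)*((k+1)*R*pr*c + k*R*pp * s/r) - 4*k*k0*c^2/(r*R^2) + 4*k*k1*R^2/(r*c^2)"

definition J1ph :: "real \<Rightarrow> real \<Rightarrow> real \<Rightarrow> real \<Rightarrow> real \<Rightarrow> real \<Rightarrow> real \<Rightarrow> real \<Rightarrow> real \<Rightarrow> real \<Rightarrow> real" where
  "J1ph k k0 k1 k2 r R c s pr pp = 2*(P1n r R c s pr pp)*(k*R*(-r*pr * s+pp*c)) - 4*k*k0*c * s/R^2 + 4*k*k1*R^2 * s/c^3"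

definition J1pr :: "real \<Rightarrow> real \<Rightarrow> real \<Rightarrow> real \<Rightarrow> real \<Rightarrow> real \<Rightarrow> real \<Rightarrow> real \<Rightarrow> real \<Rightarrow> real \<Rightarrow> real" where
  "J1pr k k0 k1 k2 r R c s pr pp = 2*(P1n r R c s pr pp)*r*R*c"

definition J1pp :: "real \<Rightarrow> real \<Rightarrow> real \<Rightarrow> real \<Rightarrow> real \<Rightarrow> real \<Rightarrow> real \<Rightarrow> real \<Rightarrow> real \<Rightarrow> real \<Rightarrow> real" where
  "J1pp k k0 k1 k2 r R c s pr pp = 2*(P1n r R c s pr pp)*R * s"

definition J2r :: "real \<Rightarrow> real \<Rightarrow> real \<Rightarrow> real \<Rightarrow> real \<Rightarrow> real \<Rightarrow> real \<Rightarrow> real \<Rightarrow> real \<Rightarrow> real \<Rightarrow> real" where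
  "J2r k k0 k1 k2 r R c s pr pp = 2*(P2n r R c s pr pp)*((k+1)*R*pr * s - k*R*pp*c/r) - 16*k*k0 * s^2/(r*R^2) - 2*k*k2 * s/(r*R)"

definition J2ph :: "real \<Rightarrow> real \<Rightarrow> real \<Rightarrow> real \<Rightarrow> real \<Rightarrow> real \<Rightarrow> real \<Rightarrow> real \<Rightarrow> real \<Rightarrow> real \<Rightarrow> real" where
  "J2ph k k0 k1 k2 r R c s pr pp = 2*(P2n r R c s pr pp)*(k*R*(r*pr*c+pp * s)) + 16*k*k0 * s*c/R^2 + 2*k*k2*c/R"

definition J2pr :: "real \<Rightarrow> real \<Rightarrow> real \<Rightarrow> real \<Rightarrow> real \<Rightarrow> real \<Rightarrow> real \<Rightarrow> real \<Rightarrow> real \<Rightarrow> real \<Rightarrow> real" where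
  "J2pr k k0 k1 k2 r R c s pr pp = 2*(P2n r R c s pr pp)*r*R * s"

definition J2pp :: "real \<Rightarrow> real \<Rightarrow> real \<Rightarrow> real \<Rightarrow> real \<Rightarrow> real \<Rightarrow> real \<Rightarrow> real \<Rightarrow> real \<Rightarrow> real \<Rightarrow> real" where
  "J2pp k k0 k1 k2 r R c s pr pp = -2*(P2n r R c s pr pp)*R*c"

definition J3r :: "real \<Rightarrow> real \<Rightarrow> real \<Rightarrow> real \<Rightarrow> real \<Rightarrow> real \<Rightarrow> real \<Rightarrow> real \<Rightarrow> real \<Rightarrow> real \<Rightarrow> real" where
  "J3r k k0 k1 k2 r R c s pr pp = ((k+1)*R*pr*c + k*R*pp * s/r)*pp + 6*k*k0 * s*c^2/(r*R^3) + 2*k*k1*R * s/(r*c^2) + k*k2*c^2/(r*R^2)"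

definition J3ph :: "real \<Rightarrow> real \<Rightarrow> real \<Rightarrow> real \<Rightarrow> real \<Rightarrow> real \<Rightarrow> real \<Rightarrow> real \<Rightarrow> real \<Rightarrow> real \<Rightarrow> real" where
  "J3ph k k0 k1 k2 r R c s pr pp = (k*R*(-r*pr * s+pp*c))*pp - 2*k0*k*(c^3-2 * s^2*c)/R^3 + 2*k1*R*k*(1/c + 2 * s^2/c^3) + k*k2*c * s/R^2"

definition J3pr :: "real \<Rightarrow> real \<Rightarrow> real \<Rightarrow> real \<Rightarrow> real \<Rightarrow> real \<Rightarrow> real \<Rightarrow> real \<Rightarrow> real \<Rightarrow> real \<Rightarrow> real" where
  "J3pr k k0 k1 k2 r R c s pr pp = r*R*c*pp"

definition J3pp :: "real \<Rightarrow> real \<Rightarrow> real \<Rightarrow> real \<Rightarrow> real \<Rightarrow> real \<Rightarrow> real \<Rightarrow> real \<Rightarrow> real \<Rightarrow> real \<Rightarrow> real" where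
  "J3pp k k0 k1 k2 r R c s pr pp = (P1n r R c s pr pp) + R * s*pp"

lemma H_dr:
  assumes "r > 0" "c \<noteq> 0"
  shows "((\<lambda>t. Hn k k0 k1 k2 t (t powr k) c s pr pp) has_real_derivative Hr k k0 k1 k2 r (r powr k) c s pr pp) (at r)"
proof -
  have nz: "(r powr k)^2 \<noteq> 0" "(r powr k)^3 \<noteq> 0" "r powr k \<noteq> 0" "c^2 \<noteq> 0" "c^3 \<noteq> 0" "r \<noteq> 0" "r powr k > 0" "2 * (r powr k)^2 \<noteq> 0"
    using assms by auto
  show ?thesis
  unfolding Hn_def
  apply (rule derivative_eq_intros refl assms nz)+
  unfolding rpk[OF assms(1)] Hr_def P1n_def P2n_def
  using nz assms by (simp add: field_simps) (algebra)?
qed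

lemma H_dph:
  assumes "R > 0" "cos (k*ph) \<noteq> 0"
  shows "((\<lambda>t. Hn k k0 k1 k2 r R (cos (k*t)) (sin (k*t)) pr pp) has_real_derivative Hph k k0 k1 k2 r R (cos (k*ph)) (sin (k*ph)) pr pp) (at ph)"
proof -
  have nz: "R^2 \<noteq> 0" "R^3 \<noteq> 0" "R \<noteq> 0" "(cos (k*ph))^2 \<noteq> 0" "(cos (k*ph))^3 \<noteq> 0" "2 * R^2 \<noteq> 0"
    using assms by auto
  show ?thesis
  unfolding Hn_def
  apply (rule derivative_eq_intros refl assms nz)+
  unfolding Hph_def P1n_def P2n_def
  using nz assms by (simp add: field_simps) (algebra)?
qed

lemma H_dpr:
  assumes "R > 0" "c \<noteq> 0"
  shows "((\<lambda>t. Hn k k0 k1 k2 r R c s t pp) has_real_derivative Hpr k k0 k1 k2 r R c s pr pp) (at pr)"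
proof -
  have nz: "R^2 \<noteq> 0" "R^3 \<noteq> 0" "R \<noteq> 0" "c^2 \<noteq> 0" "c^3 \<noteq> 0" "2 * R^2 \<noteq> 0"
    using assms by auto
  show ?thesis
  unfolding Hn_def
  apply (rule derivative_eq_intros refl assms nz)+
  unfolding Hpr_def P1n_def P2n_def
  using nz assms by (simp add: field_simps) (algebra)?
qed

lemma H_dpp:
  assumes "R > 0" "c \<noteq> 0"
  shows "((\<lambda>t. Hn k k0 k1 k2 r R c s pr t) has_real_derivative Hpp k k0 k1 k2 r R c s pr pp) (at pp)"
proof -
  have nz: "R^2 \<noteq> 0" "R^3 \<noteq> 0" "R \<noteq> 0" "c^2 \<noteq> 0" "c^3 \<noteq> 0" "2 * R^2 \<noteq> 0"
    using assms by auto
  show ?thesis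
  unfolding Hn_def
  apply (rule derivative_eq_intros refl assms nz)+
  unfolding Hpp_def P1n_def P2n_def
  using nz assms by (simp add: field_simps) (algebra)?
qed

lemma J1_dr:
  assumes "r > 0" "c \<noteq> 0"
  shows "((\<lambda>t. J1n k k0 k1 k2 t (t powr k) c s pr pp) has_real_derivative J1r k k0 k1 k2 r (r powr k) c s pr pp) (at r)"
proof -
  have nz: "(r powr k)^2 \<noteq> 0" "(r powr k)^3 \<noteq> 0" "r powr k \<noteq> 0" "c^2 \<noteq> 0" "c^3 \<noteq> 0" "r \<noteq> 0" "r powr k > 0" "2 * (r powr k)^2 \<noteq> 0"
    using assms by auto
  show ?thesis
  unfolding J1n_def P1n_def
  apply (rule derivative_eq_intros refl assms nz)+
  unfolding rpk[OF assms(1)] J1r_def P1n_def P2n_def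
  using nz assms by (simp add: field_simps) (algebra)?
qed

lemma J1_dph:
  assumes "R > 0" "cos (k*ph) \<noteq> 0"
  shows "((\<lambda>t. J1n k k0 k1 k2 r R (cos (k*t)) (sin (k*t)) pr pp) has_real_derivative J1ph k k0 k1 k2 r R (cos (k*ph)) (sin (k*ph)) pr pp) (at ph)"
proof -
  have nz: "R^2 \<noteq> 0" "R^3 \<noteq> 0" "R \<noteq> 0" "(cos (k*ph))^2 \<noteq> 0" "(cos (k*ph))^3 \<noteq> 0" "2 * R^2 \<noteq> 0"
    using assms by auto
  show ?thesis
  unfolding J1n_def P1n_def
  apply (rule derivative_eq_intros refl assms nz)+
  unfolding J1ph_def P1n_def P2n_def
  using nz assms by (simp add: field_simps) (algebra)?
qed

lemma J1_dpr:
  assumes "R > 0" "c \<noteq> 0"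
  shows "((\<lambda>t. J1n k k0 k1 k2 r R c s t pp) has_real_derivative J1pr k k0 k1 k2 r R c s pr pp) (at pr)"
proof -
  have nz: "R^2 \<noteq> 0" "R^3 \<noteq> 0" "R \<noteq> 0" "c^2 \<noteq> 0" "c^3 \<noteq> 0" "2 * R^2 \<noteq> 0"
    using assms by auto
  show ?thesis
  unfolding J1n_def P1n_def
  apply (rule derivative_eq_intros refl assms nz)+
  unfolding J1pr_def P1n_def P2n_def
  using nz assms by (simp add: field_simps) (algebra)?
qed

lemma J1_dpp:
  assumes "R > 0" "c \<noteq> 0"
  shows "((\<lambda>t. J1n k k0 k1 k2 r R c s pr t) has_real_derivative J1pp k k0 k1 k2 r R c s pr pp) (at pp)"
proof -
  have nz: "R^2 \<noteq> 0" "R^3 \<noteq> 0" "R \<noteq> 0" "c^2 \<noteq> 0" "c^3 \<noteq> 0" "2 * R^2 \<noteq> 0"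
    using assms by auto
  show ?thesis
  unfolding J1n_def P1n_def
  apply (rule derivative_eq_intros refl assms nz)+
  unfolding J1pp_def P1n_def P2n_def
  using nz assms by (simp add: field_simps) (algebra)?
qed

lemma J2_dr:
  assumes "r > 0" "c \<noteq> 0"
  shows "((\<lambda>t. J2n k k0 k1 k2 t (t powr k) c s pr pp) has_real_derivative J2r k k0 k1 k2 r (r powr k) c s pr pp) (at r)"
proof -
  have nz: "(r powr k)^2 \<noteq> 0" "(r powr k)^3 \<noteq> 0" "r powr k \<noteq> 0" "c^2 \<noteq> 0" "c^3 \<noteq> 0" "r \<noteq> 0" "r powr k > 0" "2 * (r powr k)^2 \<noteq> 0"
    using assms by auto
  show ?thesis
  unfolding J2n_def P2n_def
  apply (rule derivative_eq_intros refl assms nz)+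
  unfolding rpk[OF assms(1)] J2r_def P1n_def P2n_def
  using nz assms by (simp add: field_simps) (algebra)?
qed

lemma J2_dph:
  assumes "R > 0" "cos (k*ph) \<noteq> 0"
  shows "((\<lambda>t. J2n k k0 k1 k2 r R (cos (k*t)) (sin (k*t)) pr pp) has_real_derivative J2ph k k0 k1 k2 r R (cos (k*ph)) (sin (k*ph)) pr pp) (at ph)"
proof -
  have nz: "R^2 \<noteq> 0" "R^3 \<noteq> 0" "R \<noteq> 0" "(cos (k*ph))^2 \<noteq> 0" "(cos (k*ph))^3 \<noteq> 0" "2 * R^2 \<noteq> 0"
    using assms by auto
  show ?thesis
  unfolding J2n_def P2n_def
  apply (rule derivative_eq_intros refl assms nz)+
  unfolding J2ph_def P1n_def P2n_def
  using nz assms by (simp add: field_simps) (algebra)?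
qed

lemma J2_dpr:
  assumes "R > 0" "c \<noteq> 0"
  shows "((\<lambda>t. J2n k k0 k1 k2 r R c s t pp) has_real_derivative J2pr k k0 k1 k2 r R c s pr pp) (at pr)"
proof -
  have nz: "R^2 \<noteq> 0" "R^3 \<noteq> 0" "R \<noteq> 0" "c^2 \<noteq> 0" "c^3 \<noteq> 0" "2 * R^2 \<noteq> 0"
    using assms by auto
  show ?thesis
  unfolding J2n_def P2n_def
  apply (rule derivative_eq_intros refl assms nz)+
  unfolding J2pr_def P1n_def P2n_def
  using nz assms by (simp add: field_simps) (algebra)?
qed

lemma J2_dpp:
  assumes "R > 0" "c \<noteq> 0"
  shows "((\<lambda>t. J2n k k0 k1 k2 r R c s pr t) has_real_derivative J2pp k k0 k1 k2 r R c s pr pp) (at pp)"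
proof -
  have nz: "R^2 \<noteq> 0" "R^3 \<noteq> 0" "R \<noteq> 0" "c^2 \<noteq> 0" "c^3 \<noteq> 0" "2 * R^2 \<noteq> 0"
    using assms by auto
  show ?thesis
  unfolding J2n_def P2n_def
  apply (rule derivative_eq_intros refl assms nz)+
  unfolding J2pp_def P1n_def P2n_def
  using nz assms by (simp add: field_simps) (algebra)?
qed

lemma J3_dr:
  assumes "r > 0" "c \<noteq> 0"
  shows "((\<lambda>t. J3n k k0 k1 k2 t (t powr k) c s pr pp) has_real_derivative J3r k k0 k1 k2 r (r powr k) c s pr pp) (at r)"
proof -
  have nz: "(r powr k)^2 \<noteq> 0" "(r powr k)^3 \<noteq> 0" "r powr k \<noteq> 0" "c^2 \<noteq> 0" "c^3 \<noteq> 0" "r \<noteq> 0" "r powr k > 0" "2 * (r powr k)^2 \<noteq> 0"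
    using assms by auto
  show ?thesis
  unfolding J3n_def P1n_def
  apply (rule derivative_eq_intros refl assms nz)+
  unfolding rpk[OF assms(1)] J3r_def P1n_def P2n_def
  using nz assms by (simp add: field_simps) (algebra)?
qed

lemma J3_dph:
  assumes "R > 0" "cos (k*ph) \<noteq> 0"
  shows "((\<lambda>t. J3n k k0 k1 k2 r R (cos (k*t)) (sin (k*t)) pr pp) has_real_derivative J3ph k k0 k1 k2 r R (cos (k*ph)) (sin (k*ph)) pr pp) (at ph)"
proof -
  have nz: "R^2 \<noteq> 0" "R^3 \<noteq> 0" "R \<noteq> 0" "(cos (k*ph))^2 \<noteq> 0" "(cos (k*ph))^3 \<noteq> 0" "2 * R^2 \<noteq> 0"
    using assms by auto
  show ?thesis
  unfolding J3n_def P1n_def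
  apply (rule derivative_eq_intros refl assms nz)+
  unfolding J3ph_def P1n_def P2n_def
  using nz assms by (simp add: field_simps) (algebra)?
qed

lemma J3_dpr:
  assumes "R > 0" "c \<noteq> 0"
  shows "((\<lambda>t. J3n k k0 k1 k2 r R c s t pp) has_real_derivative J3pr k k0 k1 k2 r R c s pr pp) (at pr)"
proof -
  have nz: "R^2 \<noteq> 0" "R^3 \<noteq> 0" "R \<noteq> 0" "c^2 \<noteq> 0" "c^3 \<noteq> 0" "2 * R^2 \<noteq> 0"
    using assms by auto
  show ?thesis
  unfolding J3n_def P1n_def
  apply (rule derivative_eq_intros refl assms nz)+
  unfolding J3pr_def P1n_def P2n_def
  using nz assms by (simp add: field_simps) (algebra)?
qed

lemma J3_dpp:
  assumes "R > 0" "c \<noteq> 0"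
  shows "((\<lambda>t. J3n k k0 k1 k2 r R c s pr t) has_real_derivative J3pp k k0 k1 k2 r R c s pr pp) (at pp)"
proof -
  have nz: "R^2 \<noteq> 0" "R^3 \<noteq> 0" "R \<noteq> 0" "c^2 \<noteq> 0" "c^3 \<noteq> 0" "2 * R^2 \<noteq> 0"
    using assms by auto
  show ?thesis
  unfolding J3n_def P1n_def
  apply (rule derivative_eq_intros refl assms nz)+
  unfolding J3pp_def P1n_def P2n_def
  using nz assms by (simp add: field_simps) (algebra)?
qed




lemma H_r_link:
  assumes "r > 0" "cos ((n-1)*ph) \<noteq> 0"
  shows "d_r (H_nb n k0 k1 k2) r ph pr pph = Hr (n-1) k0 k1 k2 r (r powr (n-1)) (cos ((n-1)*ph)) (sin ((n-1)*ph)) pr pph"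
proof -
  have ev: "eventually (\<lambda>t. t \<in> {0<..}) (nhds r)"
    using assms(1) by (intro eventually_nhds_in_open) auto
  have "deriv (\<lambda>t. H_nb n k0 k1 k2 t ph pr pph) r = deriv (\<lambda>t. Hn (n-1) k0 k1 k2 t (t powr (n-1)) (cos ((n-1)*ph)) (sin ((n-1)*ph)) pr pph) r"
    by (rule deriv_cong_ev[OF eventually_mono[OF ev]]) (auto simp: H_eq)
  also have "\<dots> = Hr (n-1) k0 k1 k2 r (r powr (n-1)) (cos ((n-1)*ph)) (sin ((n-1)*ph)) pr pph"
    by (rule DERIV_imp_deriv[OF H_dr]) (use assms in auto)
  finally show ?thesis unfolding d_r_def .
qed

lemma H_ph_link:
  assumes "r > 0" "cos ((n-1)*ph) \<noteq> 0"
  shows "d_phi (H_nb n k0 k1 k2) r ph pr pph = Hph (n-1) k0 k1 k2 r (r powr (n-1)) (cos ((n-1)*ph)) (sin ((n-1)*ph)) pr pph"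
proof -
  have "(\<lambda>t. H_nb n k0 k1 k2 r t pr pph) = (\<lambda>t. Hn (n-1) k0 k1 k2 r (r powr (n-1)) (cos ((n-1)*t)) (sin ((n-1)*t)) pr pph)"
    using assms(1) by (simp add: H_eq)
  moreover have "deriv (\<lambda>t. Hn (n-1) k0 k1 k2 r (r powr (n-1)) (cos ((n-1)*t)) (sin ((n-1)*t)) pr pph) ph = Hph (n-1) k0 k1 k2 r (r powr (n-1)) (cos ((n-1)*ph)) (sin ((n-1)*ph)) pr pph"
    by (rule DERIV_imp_deriv[OF H_dph]) (use assms in auto)
  ultimately show ?thesis unfolding d_phi_def by simp
qed

lemma H_pr_link:
  assumes "r > 0" "cos ((n-1)*ph) \<noteq> 0"
  shows "d_pr (H_nb n k0 k1 k2) r ph pr pph = Hpr (n-1) k0 k1 k2 r (r powr (n-1)) (cos ((n-1)*ph)) (sin ((n-1)*ph)) pr pph"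
proof -
  have "(\<lambda>t. H_nb n k0 k1 k2 r ph t pph) = (\<lambda>t. Hn (n-1) k0 k1 k2 r (r powr (n-1)) (cos ((n-1)*ph)) (sin ((n-1)*ph)) t pph)"
    using assms(1) by (simp add: H_eq)
  moreover have "deriv (\<lambda>t. Hn (n-1) k0 k1 k2 r (r powr (n-1)) (cos ((n-1)*ph)) (sin ((n-1)*ph)) t pph) pr = Hpr (n-1) k0 k1 k2 r (r powr (n-1)) (cos ((n-1)*ph)) (sin ((n-1)*ph)) pr pph"
    by (rule DERIV_imp_deriv[OF H_dpr]) (use assms in auto)
  ultimately show ?thesis unfolding d_pr_def by simp
qed

lemma H_pp_link:
  assumes "r > 0" "cos ((n-1)*ph) \<noteq> 0"
  shows "d_pphi (H_nb n k0 k1 k2) r ph pr pph = Hpp (n-1) k0 k1 k2 r (r powr (n-1)) (cos ((n-1)*ph)) (sin ((n-1)*ph)) pr pph"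
proof -
  have "(\<lambda>t. H_nb n k0 k1 k2 r ph pr t) = (\<lambda>t. Hn (n-1) k0 k1 k2 r (r powr (n-1)) (cos ((n-1)*ph)) (sin ((n-1)*ph)) pr t)"
    using assms(1) by (simp add: H_eq)
  moreover have "deriv (\<lambda>t. Hn (n-1) k0 k1 k2 r (r powr (n-1)) (cos ((n-1)*ph)) (sin ((n-1)*ph)) pr t) pph = Hpp (n-1) k0 k1 k2 r (r powr (n-1)) (cos ((n-1)*ph)) (sin ((n-1)*ph)) pr pph"
    by (rule DERIV_imp_deriv[OF H_dpp]) (use assms in auto)
  ultimately show ?thesis unfolding d_pphi_def by simp
qed

lemma J1_r_link:
  assumes "r > 0" "cos ((n-1)*ph) \<noteq> 0"
  shows "d_r (J_b1 n k0 k1 k2) r ph pr pph = J1r (n-1) k0 k1 k2 r (r powr (n-1)) (cos ((n-1)*ph)) (sin ((n-1)*ph)) pr pph"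
proof -
  have ev: "eventually (\<lambda>t. t \<in> {0<..}) (nhds r)"
    using assms(1) by (intro eventually_nhds_in_open) auto
  have "deriv (\<lambda>t. J_b1 n k0 k1 k2 t ph pr pph) r = deriv (\<lambda>t. J1n (n-1) k0 k1 k2 t (t powr (n-1)) (cos ((n-1)*ph)) (sin ((n-1)*ph)) pr pph) r"
    by (rule deriv_cong_ev[OF eventually_mono[OF ev]]) (auto simp: J1_eq)
  also have "\<dots> = J1r (n-1) k0 k1 k2 r (r powr (n-1)) (cos ((n-1)*ph)) (sin ((n-1)*ph)) pr pph"
    by (rule DERIV_imp_deriv[OF J1_dr]) (use assms in auto)
  finally show ?thesis unfolding d_r_def .
qed

lemma J1_ph_link:
  assumes "r > 0" "cos ((n-1)*ph) \<noteq> 0"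
  shows "d_phi (J_b1 n k0 k1 k2) r ph pr pph = J1ph (n-1) k0 k1 k2 r (r powr (n-1)) (cos ((n-1)*ph)) (sin ((n-1)*ph)) pr pph"
proof -
  have "(\<lambda>t. J_b1 n k0 k1 k2 r t pr pph) = (\<lambda>t. J1n (n-1) k0 k1 k2 r (r powr (n-1)) (cos ((n-1)*t)) (sin ((n-1)*t)) pr pph)"
    using assms(1) by (simp add: J1_eq)
  moreover have "deriv (\<lambda>t. J1n (n-1) k0 k1 k2 r (r powr (n-1)) (cos ((n-1)*t)) (sin ((n-1)*t)) pr pph) ph = J1ph (n-1) k0 k1 k2 r (r powr (n-1)) (cos ((n-1)*ph)) (sin ((n-1)*ph)) pr pph"
    by (rule DERIV_imp_deriv[OF J1_dph]) (use assms in auto)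
  ultimately show ?thesis unfolding d_phi_def by simp
qed

lemma J1_pr_link:
  assumes "r > 0" "cos ((n-1)*ph) \<noteq> 0"
  shows "d_pr (J_b1 n k0 k1 k2) r ph pr pph = J1pr (n-1) k0 k1 k2 r (r powr (n-1)) (cos ((n-1)*ph)) (sin ((n-1)*ph)) pr pph"
proof -
  have "(\<lambda>t. J_b1 n k0 k1 k2 r ph t pph) = (\<lambda>t. J1n (n-1) k0 k1 k2 r (r powr (n-1)) (cos ((n-1)*ph)) (sin ((n-1)*ph)) t pph)"
    using assms(1) by (simp add: J1_eq)
  moreover have "deriv (\<lambda>t. J1n (n-1) k0 k1 k2 r (r powr (n-1)) (cos ((n-1)*ph)) (sin ((n-1)*ph)) t pph) pr = J1pr (n-1) k0 k1 k2 r (r powr (n-1)) (cos ((n-1)*ph)) (sin ((n-1)*ph)) pr pph"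
    by (rule DERIV_imp_deriv[OF J1_dpr]) (use assms in auto)
  ultimately show ?thesis unfolding d_pr_def by simp
qed

lemma J1_pp_link:
  assumes "r > 0" "cos ((n-1)*ph) \<noteq> 0"
  shows "d_pphi (J_b1 n k0 k1 k2) r ph pr pph = J1pp (n-1) k0 k1 k2 r (r powr (n-1)) (cos ((n-1)*ph)) (sin ((n-1)*ph)) pr pph"
proof -
  have "(\<lambda>t. J_b1 n k0 k1 k2 r ph pr t) = (\<lambda>t. J1n (n-1) k0 k1 k2 r (r powr (n-1)) (cos ((n-1)*ph)) (sin ((n-1)*ph)) pr t)"
    using assms(1) by (simp add: J1_eq)
  moreover have "deriv (\<lambda>t. J1n (n-1) k0 k1 k2 r (r powr (n-1)) (cos ((n-1)*ph)) (sin ((n-1)*ph)) pr t) pph = J1pp (n-1) k0 k1 k2 r (r powr (n-1)) (cos ((n-1)*ph)) (sin ((n-1)*ph)) pr pph"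
    by (rule DERIV_imp_deriv[OF J1_dpp]) (use assms in auto)
  ultimately show ?thesis unfolding d_pphi_def by simp
qed

lemma J2_r_link:
  assumes "r > 0" "cos ((n-1)*ph) \<noteq> 0"
  shows "d_r (J_b2 n k0 k1 k2) r ph pr pph = J2r (n-1) k0 k1 k2 r (r powr (n-1)) (cos ((n-1)*ph)) (sin ((n-1)*ph)) pr pph"
proof -
  have ev: "eventually (\<lambda>t. t \<in> {0<..}) (nhds r)"
    using assms(1) by (intro eventually_nhds_in_open) auto
  have "deriv (\<lambda>t. J_b2 n k0 k1 k2 t ph pr pph) r = deriv (\<lambda>t. J2n (n-1) k0 k1 k2 t (t powr (n-1)) (cos ((n-1)*ph)) (sin ((n-1)*ph)) pr pph) r"
    by (rule deriv_cong_ev[OF eventually_mono[OF ev]]) (auto simp: J2_eq)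
  also have "\<dots> = J2r (n-1) k0 k1 k2 r (r powr (n-1)) (cos ((n-1)*ph)) (sin ((n-1)*ph)) pr pph"
    by (rule DERIV_imp_deriv[OF J2_dr]) (use assms in auto)
  finally show ?thesis unfolding d_r_def .
qed

lemma J2_ph_link:
  assumes "r > 0" "cos ((n-1)*ph) \<noteq> 0"
  shows "d_phi (J_b2 n k0 k1 k2) r ph pr pph = J2ph (n-1) k0 k1 k2 r (r powr (n-1)) (cos ((n-1)*ph)) (sin ((n-1)*ph)) pr pph"
proof -
  have "(\<lambda>t. J_b2 n k0 k1 k2 r t pr pph) = (\<lambda>t. J2n (n-1) k0 k1 k2 r (r powr (n-1)) (cos ((n-1)*t)) (sin ((n-1)*t)) pr pph)"
    using assms(1) by (simp add: J2_eq)
  moreover have "deriv (\<lambda>t. J2n (n-1) k0 k1 k2 r (r powr (n-1)) (cos ((n-1)*t)) (sin ((n-1)*t)) pr pph) ph = J2ph (n-1) k0 k1 k2 r (r powr (n-1)) (cos ((n-1)*ph)) (sin ((n-1)*ph)) pr pph"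
    by (rule DERIV_imp_deriv[OF J2_dph]) (use assms in auto)
  ultimately show ?thesis unfolding d_phi_def by simp
qed

lemma J2_pr_link:
  assumes "r > 0" "cos ((n-1)*ph) \<noteq> 0"
  shows "d_pr (J_b2 n k0 k1 k2) r ph pr pph = J2pr (n-1) k0 k1 k2 r (r powr (n-1)) (cos ((n-1)*ph)) (sin ((n-1)*ph)) pr pph"
proof -
  have "(\<lambda>t. J_b2 n k0 k1 k2 r ph t pph) = (\<lambda>t. J2n (n-1) k0 k1 k2 r (r powr (n-1)) (cos ((n-1)*ph)) (sin ((n-1)*ph)) t pph)"
    using assms(1) by (simp add: J2_eq)
  moreover have "deriv (\<lambda>t. J2n (n-1) k0 k1 k2 r (r powr (n-1)) (cos ((n-1)*ph)) (sin ((n-1)*ph)) t pph) pr = J2pr (n-1) k0 k1 k2 r (r powr (n-1)) (cos ((n-1)*ph)) (sin ((n-1)*ph)) pr pph"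
    by (rule DERIV_imp_deriv[OF J2_dpr]) (use assms in auto)
  ultimately show ?thesis unfolding d_pr_def by simp
qed

lemma J2_pp_link:
  assumes "r > 0" "cos ((n-1)*ph) \<noteq> 0"
  shows "d_pphi (J_b2 n k0 k1 k2) r ph pr pph = J2pp (n-1) k0 k1 k2 r (r powr (n-1)) (cos ((n-1)*ph)) (sin ((n-1)*ph)) pr pph"
proof -
  have "(\<lambda>t. J_b2 n k0 k1 k2 r ph pr t) = (\<lambda>t. J2n (n-1) k0 k1 k2 r (r powr (n-1)) (cos ((n-1)*ph)) (sin ((n-1)*ph)) pr t)"
    using assms(1) by (simp add: J2_eq)
  moreover have "deriv (\<lambda>t. J2n (n-1) k0 k1 k2 r (r powr (n-1)) (cos ((n-1)*ph)) (sin ((n-1)*ph)) pr t) pph = J2pp (n-1) k0 k1 k2 r (r powr (n-1)) (cos ((n-1)*ph)) (sin ((n-1)*ph)) pr pph"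
    by (rule DERIV_imp_deriv[OF J2_dpp]) (use assms in auto)
  ultimately show ?thesis unfolding d_pphi_def by simp
qed

lemma J3_r_link:
  assumes "r > 0" "cos ((n-1)*ph) \<noteq> 0"
  shows "d_r (J_b3 n k0 k1 k2) r ph pr pph = J3r (n-1) k0 k1 k2 r (r powr (n-1)) (cos ((n-1)*ph)) (sin ((n-1)*ph)) pr pph"
proof -
  have ev: "eventually (\<lambda>t. t \<in> {0<..}) (nhds r)"
    using assms(1) by (intro eventually_nhds_in_open) auto
  have "deriv (\<lambda>t. J_b3 n k0 k1 k2 t ph pr pph) r = deriv (\<lambda>t. J3n (n-1) k0 k1 k2 t (t powr (n-1)) (cos ((n-1)*ph)) (sin ((n-1)*ph)) pr pph) r"
    by (rule deriv_cong_ev[OF eventually_mono[OF ev]]) (auto simp: J3_eq)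
  also have "\<dots> = J3r (n-1) k0 k1 k2 r (r powr (n-1)) (cos ((n-1)*ph)) (sin ((n-1)*ph)) pr pph"
    by (rule DERIV_imp_deriv[OF J3_dr]) (use assms in auto)
  finally show ?thesis unfolding d_r_def .
qed

lemma J3_ph_link:
  assumes "r > 0" "cos ((n-1)*ph) \<noteq> 0"
  shows "d_phi (J_b3 n k0 k1 k2) r ph pr pph = J3ph (n-1) k0 k1 k2 r (r powr (n-1)) (cos ((n-1)*ph)) (sin ((n-1)*ph)) pr pph"
proof -
  have "(\<lambda>t. J_b3 n k0 k1 k2 r t pr pph) = (\<lambda>t. J3n (n-1) k0 k1 k2 r (r powr (n-1)) (cos ((n-1)*t)) (sin ((n-1)*t)) pr pph)"
    using assms(1) by (simp add: J3_eq)
  moreover have "deriv (\<lambda>t. J3n (n-1) k0 k1 k2 r (r powr (n-1)) (cos ((n-1)*t)) (sin ((n-1)*t)) pr pph) ph = J3ph (n-1) k0 k1 k2 r (r powr (n-1)) (cos ((n-1)*ph)) (sin ((n-1)*ph)) pr pph"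
    by (rule DERIV_imp_deriv[OF J3_dph]) (use assms in auto)
  ultimately show ?thesis unfolding d_phi_def by simp
qed

lemma J3_pr_link:
  assumes "r > 0" "cos ((n-1)*ph) \<noteq> 0"
  shows "d_pr (J_b3 n k0 k1 k2) r ph pr pph = J3pr (n-1) k0 k1 k2 r (r powr (n-1)) (cos ((n-1)*ph)) (sin ((n-1)*ph)) pr pph"
proof -
  have "(\<lambda>t. J_b3 n k0 k1 k2 r ph t pph) = (\<lambda>t. J3n (n-1) k0 k1 k2 r (r powr (n-1)) (cos ((n-1)*ph)) (sin ((n-1)*ph)) t pph)"
    using assms(1) by (simp add: J3_eq)
  moreover have "deriv (\<lambda>t. J3n (n-1) k0 k1 k2 r (r powr (n-1)) (cos ((n-1)*ph)) (sin ((n-1)*ph)) t pph) pr = J3pr (n-1) k0 k1 k2 r (r powr (n-1)) (cos ((n-1)*ph)) (sin ((n-1)*ph)) pr pph"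
    by (rule DERIV_imp_deriv[OF J3_dpr]) (use assms in auto)
  ultimately show ?thesis unfolding d_pr_def by simp
qed

lemma J3_pp_link:
  assumes "r > 0" "cos ((n-1)*ph) \<noteq> 0"
  shows "d_pphi (J_b3 n k0 k1 k2) r ph pr pph = J3pp (n-1) k0 k1 k2 r (r powr (n-1)) (cos ((n-1)*ph)) (sin ((n-1)*ph)) pr pph"
proof -
  have "(\<lambda>t. J_b3 n k0 k1 k2 r ph pr t) = (\<lambda>t. J3n (n-1) k0 k1 k2 r (r powr (n-1)) (cos ((n-1)*ph)) (sin ((n-1)*ph)) pr t)"
    using assms(1) by (simp add: J3_eq)
  moreover have "deriv (\<lambda>t. J3n (n-1) k0 k1 k2 r (r powr (n-1)) (cos ((n-1)*ph)) (sin ((n-1)*ph)) pr t) pph = J3pp (n-1) k0 k1 k2 r (r powr (n-1)) (cos ((n-1)*ph)) (sin ((n-1)*ph)) pr pph"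
    by (rule DERIV_imp_deriv[OF J3_dpp]) (use assms in auto)
  ultimately show ?thesis unfolding d_pphi_def by simp
qed

lemma J1_alg:
  fixes r R c s pr pp k k0 k1 k2 :: real
  assumes "r > 0" "R > 0" "c \<noteq> 0" "s^2 + c^2 = 1"
  shows "J1r k k0 k1 k2 r R c s pr pp * Hpr k k0 k1 k2 r R c s pr pp - J1pr k k0 k1 k2 r R c s pr pp * Hr k k0 k1 k2 r R c s pr pp
     + J1ph k k0 k1 k2 r R c s pr pp * Hpp k k0 k1 k2 r R c s pr pp - J1pp k k0 k1 k2 r R c s pr pp * Hph k k0 k1 k2 r R c s pr pp = 0"
proof -
  have i: "c * inverse c = 1" "r * inverse r = 1" "R * inverse R = 1" using assms by auto
  show ?thesis unfolding J1r_def J1pr_def J1ph_def J1pp_def Hr_def Hpr_def Hph_def Hpp_def P1n_def P2n_def divide_inverse inverse_mult_distrib power_inverse[symmetric]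
    using assms(4) i by algebra
qed

lemma J1_poisson:
  assumes "r > 0" "cos ((n-1)*ph) \<noteq> 0"
  shows "poisson (J_b1 n k0 k1 k2) (H_nb n k0 k1 k2) r ph pr pph = 0"
  unfolding poisson_def J1_r_link[OF assms] J1_ph_link[OF assms] J1_pr_link[OF assms] J1_pp_link[OF assms]
    H_r_link[OF assms] H_ph_link[OF assms] H_pr_link[OF assms] H_pp_link[OF assms]
  by (rule J1_alg) (use assms in auto)

lemma J2_alg:
  fixes r R c s pr pp k k0 k1 k2 :: real
  assumes "r > 0" "R > 0" "c \<noteq> 0" "s^2 + c^2 = 1"
  shows "J2r k k0 k1 k2 r R c s pr pp * Hpr k k0 k1 k2 r R c s pr pp - J2pr k k0 k1 k2 r R c s pr pp * Hr k k0 k1 k2 r R c s pr pp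
     + J2ph k k0 k1 k2 r R c s pr pp * Hpp k k0 k1 k2 r R c s pr pp - J2pp k k0 k1 k2 r R c s pr pp * Hph k k0 k1 k2 r R c s pr pp = 0"
proof -
  have i: "c * inverse c = 1" "r * inverse r = 1" "R * inverse R = 1" using assms by auto
  show ?thesis unfolding J2r_def J2pr_def J2ph_def J2pp_def Hr_def Hpr_def Hph_def Hpp_def P1n_def P2n_def divide_inverse inverse_mult_distrib power_inverse[symmetric]
    using assms(4) i by algebra
qed

lemma J2_poisson:
  assumes "r > 0" "cos ((n-1)*ph) \<noteq> 0"
  shows "poisson (J_b2 n k0 k1 k2) (H_nb n k0 k1 k2) r ph pr pph = 0"
  unfolding poisson_def J2_r_link[OF assms] J2_ph_link[OF assms] J2_pr_link[OF assms] J2_pp_link[OF assms]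
    H_r_link[OF assms] H_ph_link[OF assms] H_pr_link[OF assms] H_pp_link[OF assms]
  by (rule J2_alg) (use assms in auto)

lemma J3_alg:
  fixes r R c s pr pp k k0 k1 k2 :: real
  assumes "r > 0" "R > 0" "c \<noteq> 0" "s^2 + c^2 = 1"
  shows "J3r k k0 k1 k2 r R c s pr pp * Hpr k k0 k1 k2 r R c s pr pp - J3pr k k0 k1 k2 r R c s pr pp * Hr k k0 k1 k2 r R c s pr pp
     + J3ph k k0 k1 k2 r R c s pr pp * Hpp k k0 k1 k2 r R c s pr pp - J3pp k k0 k1 k2 r R c s pr pp * Hph k k0 k1 k2 r R c s pr pp = 0"
proof -
  have i: "c * inverse c = 1" "r * inverse r = 1" "R * inverse R = 1" using assms by auto
  show ?thesis unfolding J3r_def J3pr_def J3ph_def J3pp_def Hr_def Hpr_def Hph_def Hpp_def P1n_def P2n_def divide_inverse inverse_mult_distrib power_inverse[symmetric]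
    using assms(4) i by algebra
qed

lemma J3_poisson:
  assumes "r > 0" "cos ((n-1)*ph) \<noteq> 0"
  shows "poisson (J_b3 n k0 k1 k2) (H_nb n k0 k1 k2) r ph pr pph = 0"
  unfolding poisson_def J3_r_link[OF assms] J3_ph_link[OF assms] J3_pr_link[OF assms] J3_pp_link[OF assms]
    H_r_link[OF assms] H_ph_link[OF assms] H_pr_link[OF assms] H_pp_link[OF assms]
  by (rule J3_alg) (use assms in auto)




definition Dg :: "real \<Rightarrow> real \<Rightarrow> real \<Rightarrow> real \<Rightarrow> real \<Rightarrow> real \<Rightarrow> real \<Rightarrow> real \<Rightarrow> real \<Rightarrow> real \<Rightarrow> real" where
  "Dg A1 A2 A3 k r R c sn x pp = (let P1 = R*(r*x*c+pp* sn); P2 = R*(r*x* sn-pp*c);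
     a1 = 2*P1*(k*R*(-r*x* sn+pp*c)) + A1; b1 = 2*P2*(k*R*(r*x*c+pp* sn)) + A2; c1 = k*R*(-r*x* sn+pp*c)*pp + A3;
     a2 = 2*P1*r*R*c; b2 = 2*P2*r*R* sn; c2 = r*R*c*pp;
     a3 = 2*P1*R* sn; b3 = -2*P2*R*c; c3 = P1 + R* sn*pp in
     a1*(b2*c3 - c2*b3) - b1*(a2*c3 - c2*a3) + c1*(a2*b3 - b2*a3))"

lemma fd:
  fixes k r R c sn x h pp A1 A2 A3 :: real
  shows "Dg A1 A2 A3 k r R c sn x pp - 4 * Dg A1 A2 A3 k r R c sn (x+h) pp + 6 * Dg A1 A2 A3 k r R c sn (x+2*h) pp
     - 4 * Dg A1 A2 A3 k r R c sn (x+3*h) pp + Dg A1 A2 A3 k r R c sn (x+4*h) pp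
   = 24 * h^4 * (-4 * k * r^5 * R^5 * c^2 * sn * (c^2 + sn^2))"
  unfolding Dg_def Let_def by algebra




lemma cramer:
  fixes a b g a1 a2 a3 b1 b2 b3 c1 c2 c3 :: real
  assumes "a*a1+b*b1+g*c1=0" "a*a2+b*b2+g*c2=0" "a*a3+b*b3+g*c3=0"
    "a1*(b2*c3 - c2*b3) - b1*(a2*c3 - c2*a3) + c1*(a2*b3 - b2*a3) \<noteq> 0"
  shows "a=0 \<and> b=0 \<and> g=0"
proof -
  let ?d = "a1*(b2*c3 - c2*b3) - b1*(a2*c3 - c2*a3) + c1*(a2*b3 - b2*a3)"
  have "a * ?d = 0" "b * ?d = 0" "g * ?d = 0" using assms(1-3) by algebra+
  then show ?thesis using assms(4) by auto
qed

definition A1 :: "real \<Rightarrow> real \<Rightarrow> real \<Rightarrow> real \<Rightarrow> real \<Rightarrow> real \<Rightarrow> real \<Rightarrow> real" where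
  "A1 k k0 k1 k2 R c sn = - 4*k*k0*c * sn/R^2 + 4*k*k1*R^2 * sn/c^3"
definition A2 :: "real \<Rightarrow> real \<Rightarrow> real \<Rightarrow> real \<Rightarrow> real \<Rightarrow> real \<Rightarrow> real \<Rightarrow> real" where
  "A2 k k0 k1 k2 R c sn = 16*k*k0 * sn*c/R^2 + 2*k*k2*c/R"
definition A3 :: "real \<Rightarrow> real \<Rightarrow> real \<Rightarrow> real \<Rightarrow> real \<Rightarrow> real \<Rightarrow> real \<Rightarrow> real" where
  "A3 k k0 k1 k2 R c sn = - 2*k0*k*(c^3-2 * sn^2*c)/R^3 + 2*k1*R*k*(1/c + 2 * sn^2/c^3) + k*k2*c * sn/R^2"

lemma indep_at:
  assumes "r > 0" "cos ((n-1)*ph) \<noteq> 0"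
    and "Dg (A1 (n-1) k0 k1 k2 (r powr (n-1)) (cos ((n-1)*ph)) (sin ((n-1)*ph)))
            (A2 (n-1) k0 k1 k2 (r powr (n-1)) (cos ((n-1)*ph)) (sin ((n-1)*ph)))
            (A3 (n-1) k0 k1 k2 (r powr (n-1)) (cos ((n-1)*ph)) (sin ((n-1)*ph)))
            (n-1) r (r powr (n-1)) (cos ((n-1)*ph)) (sin ((n-1)*ph)) pr pph \<noteq> 0"
  shows "indep3_at (J_b1 n k0 k1 k2) (J_b2 n k0 k1 k2) (J_b3 n k0 k1 k2) (r, ph, pr, pph)"
  unfolding indep3_at_def prod.case
proof (intro allI impI)
  fix a b g :: real
  assume h: "a * d_r (J_b1 n k0 k1 k2) r ph pr pph + b * d_r (J_b2 n k0 k1 k2) r ph pr pph + g * d_r (J_b3 n k0 k1 k2) r ph pr pph = 0 \<and>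
        a * d_phi (J_b1 n k0 k1 k2) r ph pr pph + b * d_phi (J_b2 n k0 k1 k2) r ph pr pph + g * d_phi (J_b3 n k0 k1 k2) r ph pr pph = 0 \<and>
        a * d_pr (J_b1 n k0 k1 k2) r ph pr pph + b * d_pr (J_b2 n k0 k1 k2) r ph pr pph + g * d_pr (J_b3 n k0 k1 k2) r ph pr pph = 0 \<and>
        a * d_pphi (J_b1 n k0 k1 k2) r ph pr pph + b * d_pphi (J_b2 n k0 k1 k2) r ph pr pph + g * d_pphi (J_b3 n k0 k1 k2) r ph pr pph = 0"
  define k where "k = n - 1"
  define R where "R = r powr (n-1)"
  define c where "c = cos ((n-1)*ph)"
  define sn where "sn = sin ((n-1)*ph)"
  note L = J1_ph_link[OF assms(1,2)] J2_ph_link[OF assms(1,2)] J3_ph_link[OF assms(1,2)]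
    J1_pr_link[OF assms(1,2)] J2_pr_link[OF assms(1,2)] J3_pr_link[OF assms(1,2)]
    J1_pp_link[OF assms(1,2)] J2_pp_link[OF assms(1,2)] J3_pp_link[OF assms(1,2)]
  have e: "a * J1ph k k0 k1 k2 r R c sn pr pph + b * J2ph k k0 k1 k2 r R c sn pr pph + g * J3ph k k0 k1 k2 r R c sn pr pph = 0"
    "a * J1pr k k0 k1 k2 r R c sn pr pph + b * J2pr k k0 k1 k2 r R c sn pr pph + g * J3pr k k0 k1 k2 r R c sn pr pph = 0"
    "a * J1pp k k0 k1 k2 r R c sn pr pph + b * J2pp k k0 k1 k2 r R c sn pr pph + g * J3pp k k0 k1 k2 r R c sn pr pph = 0"
    using h unfolding L k_def R_def c_def sn_def by auto
  let ?P1 = "R*(r*pr*c+pph* sn)" and ?P2 = "R*(r*pr* sn-pph*c)"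
  have q: "J1ph k k0 k1 k2 r R c sn pr pph = 2*?P1*(k*R*(-r*pr* sn+pph*c)) + A1 k k0 k1 k2 R c sn"
    "J2ph k k0 k1 k2 r R c sn pr pph = 2*?P2*(k*R*(r*pr*c+pph* sn)) + A2 k k0 k1 k2 R c sn"
    "J3ph k k0 k1 k2 r R c sn pr pph = k*R*(-r*pr* sn+pph*c)*pph + A3 k k0 k1 k2 R c sn"
    "J1pr k k0 k1 k2 r R c sn pr pph = 2*?P1*r*R*c"
    "J2pr k k0 k1 k2 r R c sn pr pph = 2*?P2*r*R* sn"
    "J3pr k k0 k1 k2 r R c sn pr pph = r*R*c*pph"
    "J1pp k k0 k1 k2 r R c sn pr pph = 2*?P1*R* sn"
    "J2pp k k0 k1 k2 r R c sn pr pph = -2*?P2*R*c"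
    "J3pp k k0 k1 k2 r R c sn pr pph = ?P1 + R* sn*pph"
    unfolding J1ph_def J2ph_def J3ph_def J1pr_def J2pr_def J3pr_def J1pp_def J2pp_def J3pp_def
      A1_def A2_def A3_def P1n_def P2n_def by (simp_all add: algebra_simps add_divide_distrib[symmetric])
  have d: "Dg (A1 k k0 k1 k2 R c sn) (A2 k k0 k1 k2 R c sn) (A3 k k0 k1 k2 R c sn) k r R c sn pr pph \<noteq> 0"
    using assms(3) unfolding k_def R_def c_def sn_def .
  show "a = 0 \<and> b = 0 \<and> g = 0"
    by (rule cramer[OF e[unfolded q]]) (use d in \<open>simp add: Dg_def Let_def algebra_simps\<close>)
qed




lemma dist_pair_le: "dist (a, b) (c, d) \<le> dist a c + dist b d"
  unfolding dist_Pair_Pair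
  using sqrt_sum_squares_le_sum_abs[of "dist a c" "dist b d"] by simp

lemma dist_q: "dist (r::real, ph', x::real, pph::real) (r, ph, pr, pph) \<le> \<bar>ph' - ph\<bar> + \<bar>x - pr\<bar>"
proof -
  have "dist (r, ph', x, pph) (r, ph, pr, pph) \<le> dist r r + dist (ph', x, pph) (ph, pr, pph)"
    by (rule dist_pair_le)
  also have "\<dots> \<le> 0 + (dist ph' ph + dist (x, pph) (pr, pph))"
    using dist_pair_le[of ph' "(x,pph)" ph "(pr,pph)"] by simp
  also have "\<dots> \<le> 0 + (dist ph' ph + (dist x pr + dist pph pph))"
    using dist_pair_le[of x pph pr pph] by simp
  finally show ?thesis by (simp add: dist_real_def)
qed

lemma good_phase:
  fixes k ph e :: real
  assumes "k \<noteq> 0" "cos (k*ph) \<noteq> 0" "e > 0"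
  shows "\<exists>ph'. \<bar>ph' - ph\<bar> < e \<and> cos (k*ph') \<noteq> 0 \<and> sin (k*ph') \<noteq> 0"
proof (cases "sin (k*ph) = 0")
  case False then show ?thesis using assms by (intro exI[of _ ph]) auto
next
  case True
  define d where "d = min (e/2) (pi/(4*\<bar>k\<bar>))"
  have dpos: "d > 0" using assms pi_gt_zero unfolding d_def by auto
  have "\<bar>k\<bar> * d \<le> \<bar>k\<bar> * (pi/(4*\<bar>k\<bar>))"
    unfolding d_def by (intro mult_left_mono) auto
  also have "\<dots> = pi/4" using assms by (simp add: field_simps)
  finally have kd: "\<bar>k * d\<bar> \<le> pi/4" using dpos by (simp add: abs_mult)
  have kd0: "k * d \<noteq> 0" using assms dpos by simp
  have s1: "sin (k*d) \<noteq> 0"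
  proof (cases "k*d > 0")
    case True then show ?thesis using kd sin_gt_zero[of "k*d"] pi_gt_zero by auto
  next
    case False
    then have "-(k*d) > 0" using kd0 by linarith
    then have "sin (-(k*d)) > 0" using kd sin_gt_zero[of "-(k*d)"] pi_gt_zero by auto
    then show ?thesis by simp
  qed
  have c1: "cos (k*d) > 0" using kd pi_gt_zero by (intro cos_gt_zero_pi) (use abs_le_iff[of "k*d" "pi/4"] in linarith)+
  have "sin (k*(ph+d)) = sin (k*ph) * cos (k*d) + cos (k*ph) * sin (k*d)"
    by (simp add: distrib_left sin_add)
  then have "sin (k*(ph+d)) \<noteq> 0" using True assms s1 by simp
  moreover have "cos (k*(ph+d)) = cos (k*ph) * cos (k*d) - sin (k*ph) * sin (k*d)"
    by (simp add: distrib_left cos_add)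
  then have "cos (k*(ph+d)) \<noteq> 0" using True assms c1 by simp
  moreover have "\<bar>(ph + d) - ph\<bar> < e" using dpos assms unfolding d_def by auto
  ultimately show ?thesis by blast
qed

lemma good_mom:
  fixes k r R c sn pr pph h aa bb cc :: real
  assumes "k \<noteq> 0" "r > 0" "R > 0" "c \<noteq> 0" "sn \<noteq> 0" "sn^2 + c^2 = 1" "h > 0"
  shows "\<exists>x. \<bar>x - pr\<bar> \<le> 4*h \<and> Dg aa bb cc k r R c sn x pph \<noteq> 0"
proof (rule ccontr)
  assume "\<not> ?thesis"
  then have z: "\<And>x. \<bar>x - pr\<bar> \<le> 4*h \<Longrightarrow> Dg aa bb cc k r R c sn x pph = 0" by auto
  have "Dg aa bb cc k r R c sn pr pph = 0" "Dg aa bb cc k r R c sn (pr+h) pph = 0"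
    "Dg aa bb cc k r R c sn (pr+2*h) pph = 0" "Dg aa bb cc k r R c sn (pr+3*h) pph = 0"
    "Dg aa bb cc k r R c sn (pr+4*h) pph = 0"
    by (rule z; use assms(7) in simp)+
  with fd[of aa bb cc k r R c sn pr pph h]
  have "24 * h^4 * (-4 * k * r^5 * R^5 * c^2 * sn * (c^2 + sn^2)) = 0" by simp
  then show False using assms by (simp add: add.commute)
qed

lemma dense_indep:
  assumes "n \<noteq> 1" "p \<in> dom_nb n"
  shows "p \<in> closure {q \<in> dom_nb n. indep3_at (J_b1 n k0 k1 k2) (J_b2 n k0 k1 k2) (J_b3 n k0 k1 k2) q}"
proof -
  obtain r ph pr pph where p: "p = (r, ph, pr, pph)" by (cases p) auto
  have r: "r > 0" and c: "cos ((n-1)*ph) \<noteq> 0" using assms(2) unfolding p dom_nb_def by auto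
  have k: "n - 1 \<noteq> 0" using assms(1) by simp
  show ?thesis unfolding closure_approachable p
  proof (intro allI impI)
    fix e :: real assume e: "e > 0"
    obtain ph' where ph': "\<bar>ph' - ph\<bar> < e/2" "cos ((n-1)*ph') \<noteq> 0" "sin ((n-1)*ph') \<noteq> 0"
      using good_phase[OF k c, of "e/2"] e by auto
    have R: "r powr (n-1) > 0" using r by simp
    have sc: "(sin ((n-1)*ph'))^2 + (cos ((n-1)*ph'))^2 = 1" by simp
    obtain x where x: "\<bar>x - pr\<bar> \<le> 4*(e/16)"
      "Dg (A1 (n-1) k0 k1 k2 (r powr (n-1)) (cos ((n-1)*ph')) (sin ((n-1)*ph')))
          (A2 (n-1) k0 k1 k2 (r powr (n-1)) (cos ((n-1)*ph')) (sin ((n-1)*ph')))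
          (A3 (n-1) k0 k1 k2 (r powr (n-1)) (cos ((n-1)*ph')) (sin ((n-1)*ph')))
          (n-1) r (r powr (n-1)) (cos ((n-1)*ph')) (sin ((n-1)*ph')) x pph \<noteq> 0"
      using good_mom[OF k r R ph'(2) ph'(3) sc, where h="e/16" and pr=pr and pph=pph
        and aa="A1 (n-1) k0 k1 k2 (r powr (n-1)) (cos ((n-1)*ph')) (sin ((n-1)*ph'))"
        and bb="A2 (n-1) k0 k1 k2 (r powr (n-1)) (cos ((n-1)*ph')) (sin ((n-1)*ph'))"
        and cc="A3 (n-1) k0 k1 k2 (r powr (n-1)) (cos ((n-1)*ph')) (sin ((n-1)*ph'))"] e by auto
    have "indep3_at (J_b1 n k0 k1 k2) (J_b2 n k0 k1 k2) (J_b3 n k0 k1 k2) (r, ph', x, pph)"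
      by (rule indep_at[OF r ph'(2) x(2)])
    moreover have "(r, ph', x, pph) \<in> dom_nb n" using r ph'(2) unfolding dom_nb_def by auto
    moreover have "dist (r, ph', x, pph) (r, ph, pr, pph) < e"
      using dist_q[of r ph' x pph ph pr] ph'(1) x(1) by linarith
    ultimately show "\<exists>y\<in>{q \<in> dom_nb n. indep3_at (J_b1 n k0 k1 k2) (J_b2 n k0 k1 k2) (J_b3 n k0 k1 k2) q}.
        dist y (r, ph, pr, pph) < e" by blast
  qed
qed

theorem mainTheorem5:
  fixes n k0 k1 k2 :: real
  assumes "n \<noteq> 1"
  shows "(\<forall>(r, ph, pr, pph) \<in> dom_nb n.
            poisson (J_b1 n k0 k1 k2) (H_nb n k0 k1 k2) r ph pr pph = 0 \<and>
            poisson (J_b2 n k0 k1 k2) (H_nb n k0 k1 k2) r ph pr pph = 0 \<and>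
            poisson (J_b3 n k0 k1 k2) (H_nb n k0 k1 k2) r ph pr pph = 0)
       \<and> func_indep3_on (J_b1 n k0 k1 k2) (J_b2 n k0 k1 k2) (J_b3 n k0 k1 k2) (dom_nb n)"
proof
  show "\<forall>(r, ph, pr, pph) \<in> dom_nb n.
            poisson (J_b1 n k0 k1 k2) (H_nb n k0 k1 k2) r ph pr pph = 0 \<and>
            poisson (J_b2 n k0 k1 k2) (H_nb n k0 k1 k2) r ph pr pph = 0 \<and>
            poisson (J_b3 n k0 k1 k2) (H_nb n k0 k1 k2) r ph pr pph = 0"
    unfolding dom_nb_def using J1_poisson J2_poisson J3_poisson by auto
  show "func_indep3_on (J_b1 n k0 k1 k2) (J_b2 n k0 k1 k2) (J_b3 n k0 k1 k2) (dom_nb n)"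
    unfolding func_indep3_on_def using dense_indep[OF assms] by blast
qed


end
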